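(* In the standing setup, let $(Z,H,(c_x))$ satisfy properties (P1) and (P2) for some $j$, and let $W$ be a boundary wall of $Z$. Then all edges $e$ dual to $W$ that cross out of $Z$ determine the same equivalence class $[c_e]_W$; in particular they all give the same value $c_e(\overline W)$.
   Context: Standing setup. $X$ is a finite-dimensional CAT(0) cube complex, $\delta$-hyperbolic, with a group $G$ acting properly and cocompactly on it. For an edge $e$, $W(e)$ is the wall dual to $e$. Walls of $X$ are closed convex; $X\setminus W$ has two components whose closures are the half-spaces of $W$. $K\trianglelefteq G$ is a torsion-free normal subgroup, $\mathcal X=X/K$, and $\overline W$ denotes the image in $\mathcal X$ of a wall $W$ of $X$ (a wall of $\mathcal X$). All walls of $\mathcal X$ are compact and embedded, and there is $R\ge\delta+2\sqrt{\dim X}$ such that distinct walls of $X$ at distance $<R$ have distinct images in $\mathcal X$. $\Gamma$ is the graph whose vertices are the walls of $\mathcal X$, with distinct walls $\overline W_1,\overline W_2$ adjacent iff $d(\overline W_1,\overline W_2)\le R$ in $\mathcal X$; $k$ bounds its vertex degrees. $C_{k+1}(\Gamma)$ is the set of maps $c:V(\Gamma)\to\{1,\dots,k+1\}$ giving distinct values to adjacent vertices; $G$ acts on it by $(gc)(\overline W)=c(g^{-1}\overline W)$. For a wall $W$ of $X$ and $c\in C_{k+1}(\Gamma)$, $[c]_W$ is the set of $c'\in C_{k+1}(\Gamma)$ that agree with $c$ on the ball of radius $c(\overline W)$ about $\overline W$ in $\Gamma$ (combinatorial distance). Fix $j\in\{0,\dots,k+1\}$. $Z\subset X$ is a nonempty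 intersection of half-spaces containing a vertex, $H\le G$ preserves $Z$ and acts freely and cocompactly on it, and each vertex $x\in Z$ carries $c_x\in C_{k+1}(\Gamma)$ with $c_{hx}=hc_x$ for $h\in H$, such that: (P1) if an edge $e$ joins vertices $x,y\in Z$ then $[c_x]_{W(e)}=[c_y]_{W(e)}$; (P2) if an edge $e$ joins vertices $x,y$ with $x\in Z$, then $y\in Z$ iff $c_x(\overline{W(e)})>j$. An edge $e$ crosses out of $Z$ if exactly one endpoint $x$ lies in $Z$; then put $c_e:=c_x$. A boundary wall of $Z$ is a wall $W(e)$ for some edge $e$ crossing out of $Z$. *)

theory Defs
  imports "HOL-Analysis.Analysis" "HOL-Algebra.Coset"
begin

section \<open>CAT(0) cube complexes, modelled through their 1-skeleton (median graphs)\<close>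

definition Erel :: "('v \<Rightarrow> 'v \<Rightarrow> bool) \<Rightarrow> ('v \<times> 'v) set" where
  "Erel E = {(x, y). E x y}"

definition gdist :: "('v \<Rightarrow> 'v \<Rightarrow> bool) \<Rightarrow> 'v \<Rightarrow> 'v \<Rightarrow> nat" where
  "gdist E a b = (LEAST n. (a, b) \<in> (Erel E) ^^ n)"

definition median_graph :: "('v \<Rightarrow> 'v \<Rightarrow> bool) \<Rightarrow> bool" where
  "median_graph E \<longleftrightarrow>
     (\<forall>x y. E x y \<longrightarrow> E y x) \<and> (\<forall>x. \<not> E x x) \<and>
     (\<forall>a b. \<exists>n. (a, b) \<in> (Erel E) ^^ n) \<and>
     (\<forall>a b c. \<exists>!m. gdist E a m + gdist E m b = gdist E a b \<and>
                    gdist E b m + gdist E m c = gdist E b c \<and>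
                    gdist E a m + gdist E m c = gdist E a c)"

definition hs :: "('v \<Rightarrow> 'v \<Rightarrow> bool) \<Rightarrow> 'v \<Rightarrow> 'v \<Rightarrow> 'v set" where
  "hs E a b = {v. gdist E v a < gdist E v b}"

definition HS :: "('v \<Rightarrow> 'v \<Rightarrow> bool) \<Rightarrow> 'v set set" where
  "HS E = {hs E a b | a b. E a b}"

definition wallE :: "('v \<Rightarrow> 'v \<Rightarrow> bool) \<Rightarrow> 'v \<Rightarrow> 'v \<Rightarrow> 'v set set" where
  "wallE E a b = {hs E a b, hs E b a}"

definition walls :: "('v \<Rightarrow> 'v \<Rightarrow> bool) \<Rightarrow> 'v set set set" where
  "walls E = {wallE E a b | a b. E a b}"

definition wall_of :: "'v set \<Rightarrow> 'v set set" where
  "wall_of h = {h, - h}"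

subsection \<open>Geometric realisation: points as half-space coordinates in [0,1]\<close>

definition vpt :: "('v \<Rightarrow> 'v \<Rightarrow> bool) \<Rightarrow> 'v \<Rightarrow> 'v set \<Rightarrow> real" where
  "vpt E v = (\<lambda>h. if h \<in> HS E \<and> v \<in> h then 1 else 0)"

text \<open>cube E v S: the walls in S span a cube at the vertex v (all flips of subsets of S are vertices).\<close>
definition cube :: "('v \<Rightarrow> 'v \<Rightarrow> bool) \<Rightarrow> 'v \<Rightarrow> 'v set set set \<Rightarrow> bool" where
  "cube E v S \<longleftrightarrow> finite S \<and> S \<subseteq> walls E \<and>
     (\<forall>T\<subseteq>S. \<exists>u. \<forall>h\<in>HS E. (u \<in> h \<longleftrightarrow> ((v \<in> h) \<noteq> (wall_of h \<in> T))))"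

definition in_cube :: "('v \<Rightarrow> 'v \<Rightarrow> bool) \<Rightarrow> 'v \<Rightarrow> 'v set set set \<Rightarrow> ('v set \<Rightarrow> real) \<Rightarrow> bool" where
  "in_cube E v S p \<longleftrightarrow> (\<forall>h. h \<notin> HS E \<longrightarrow> p h = 0) \<and>
     (\<forall>h\<in>HS E. if wall_of h \<in> S then 0 \<le> p h \<and> p h \<le> 1 \<and> p (- h) = 1 - p h
                 else p h = vpt E v h)"

definition Pts :: "('v \<Rightarrow> 'v \<Rightarrow> bool) \<Rightarrow> ('v set \<Rightarrow> real) set" where
  "Pts E = {p. \<exists>v S. cube E v S \<and> in_cube E v S p}"

definition same_cube :: "('v \<Rightarrow> 'v \<Rightarrow> bool) \<Rightarrow> ('v set \<Rightarrow> real) \<Rightarrow> ('v set \<Rightarrow> real) \<Rightarrow> bool" where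
  "same_cube E p q \<longleftrightarrow> (\<exists>v S. cube E v S \<and> in_cube E v S p \<and> in_cube E v S q)"

text \<open>Euclidean distance inside a common cube (each wall contributes two half-space coordinates).\<close>
definition cdist :: "('v \<Rightarrow> 'v \<Rightarrow> bool) \<Rightarrow> ('v set \<Rightarrow> real) \<Rightarrow> ('v set \<Rightarrow> real) \<Rightarrow> real" where
  "cdist E p q = sqrt ((\<Sum>h\<in>{h\<in>HS E. p h \<noteq> q h}. (p h - q h)^2) / 2)"

definition is_chain :: "('v \<Rightarrow> 'v \<Rightarrow> bool) \<Rightarrow> ('v set \<Rightarrow> real) \<Rightarrow> ('v set \<Rightarrow> real) \<Rightarrow> ('v set \<Rightarrow> real) list \<Rightarrow> bool" where
  "is_chain E p q ps \<longleftrightarrow> ps \<noteq> [] \<and> hd ps = p \<and> last ps = q \<and>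
     (\<forall>i < length ps - 1. same_cube E (ps ! i) (ps ! Suc i))"

definition chain_len :: "('v \<Rightarrow> 'v \<Rightarrow> bool) \<Rightarrow> ('v set \<Rightarrow> real) list \<Rightarrow> real" where
  "chain_len E ps = (\<Sum>i < length ps - 1. cdist E (ps ! i) (ps ! Suc i))"

definition cdX :: "('v \<Rightarrow> 'v \<Rightarrow> bool) \<Rightarrow> ('v set \<Rightarrow> real) \<Rightarrow> ('v set \<Rightarrow> real) \<Rightarrow> real" where
  "cdX E p q = Inf {chain_len E ps | ps. is_chain E p q ps}"

definition mtop :: "('v \<Rightarrow> 'v \<Rightarrow> bool) \<Rightarrow> ('v set \<Rightarrow> real) topology" where
  "mtop E = Metric_space.mtopology (Pts E) (cdX E)"

definition hyp :: "('v \<Rightarrow> 'v \<Rightarrow> bool) \<Rightarrow> 'v set set \<Rightarrow> ('v set \<Rightarrow> real) set" where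
  "hyp E W = {p \<in> Pts E. \<forall>h\<in>W. p h = 1/2}"

definition ghalf :: "('v \<Rightarrow> 'v \<Rightarrow> bool) \<Rightarrow> 'v set \<Rightarrow> ('v set \<Rightarrow> real) set" where
  "ghalf E h = {p \<in> Pts E. p h \<ge> 1/2}"

definition wdist :: "('v \<Rightarrow> 'v \<Rightarrow> bool) \<Rightarrow> 'v set set \<Rightarrow> 'v set set \<Rightarrow> real" where
  "wdist E W1 W2 = Inf {cdX E p q | p q. p \<in> hyp E W1 \<and> q \<in> hyp E W2}"

definition finite_dim :: "('v \<Rightarrow> 'v \<Rightarrow> bool) \<Rightarrow> bool" where
  "finite_dim E \<longleftrightarrow> bdd_above {card S | S. \<exists>v. cube E v S}"

definition dimX :: "('v \<Rightarrow> 'v \<Rightarrow> bool) \<Rightarrow> nat" where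
  "dimX E = Sup {card S | S. \<exists>v. cube E v S}"

definition geodesic :: "('v \<Rightarrow> 'v \<Rightarrow> bool) \<Rightarrow> ('v set \<Rightarrow> real) \<Rightarrow> ('v set \<Rightarrow> real) \<Rightarrow> (real \<Rightarrow> 'v set \<Rightarrow> real) \<Rightarrow> bool" where
  "geodesic E p q \<gamma> \<longleftrightarrow> \<gamma> 0 = p \<and> \<gamma> (cdX E p q) = q \<and>
     (\<forall>s\<in>{0..cdX E p q}. \<gamma> s \<in> Pts E) \<and>
     (\<forall>s\<in>{0..cdX E p q}. \<forall>t\<in>{0..cdX E p q}. cdX E (\<gamma> s) (\<gamma> t) = \<bar>s - t\<bar>)"

definition hyperbolic :: "('v \<Rightarrow> 'v \<Rightarrow> bool) \<Rightarrow> real \<Rightarrow> bool" where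
  "hyperbolic E \<delta> \<longleftrightarrow> (\<forall>p q r \<gamma>1 \<gamma>2 \<gamma>3. p \<in> Pts E \<and> q \<in> Pts E \<and> r \<in> Pts E \<and>
      geodesic E p q \<gamma>1 \<and> geodesic E q r \<gamma>2 \<and> geodesic E r p \<gamma>3 \<longrightarrow>
      (\<forall>x\<in>\<gamma>1 ` {0..cdX E p q}. \<exists>y\<in>\<gamma>2 ` {0..cdX E q r} \<union> \<gamma>3 ` {0..cdX E r p}. cdX E x y \<le> \<delta>))"

definition auto_action :: "('g, 'b) monoid_scheme \<Rightarrow> ('v \<Rightarrow> 'v \<Rightarrow> bool) \<Rightarrow> ('g \<Rightarrow> 'v \<Rightarrow> 'v) \<Rightarrow> bool" where
  "auto_action G E \<phi> \<longleftrightarrow>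
     (\<forall>g\<in>carrier G. bij (\<phi> g) \<and> (\<forall>x y. E x y \<longleftrightarrow> E (\<phi> g x) (\<phi> g y))) \<and>
     \<phi> \<one>\<^bsub>G\<^esub> = id \<and>
     (\<forall>g\<in>carrier G. \<forall>h\<in>carrier G. \<phi> (g \<otimes>\<^bsub>G\<^esub> h) = \<phi> g \<circ> \<phi> h)"

definition pact :: "('g \<Rightarrow> 'v \<Rightarrow> 'v) \<Rightarrow> 'g \<Rightarrow> ('v set \<Rightarrow> real) \<Rightarrow> ('v set \<Rightarrow> real)" where
  "pact \<phi> g p = (\<lambda>h. p (\<phi> g -` h))"

definition proper_action :: "('g, 'b) monoid_scheme \<Rightarrow> ('v \<Rightarrow> 'v \<Rightarrow> bool) \<Rightarrow> ('g \<Rightarrow> 'v \<Rightarrow> 'v) \<Rightarrow> bool" where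
  "proper_action G E \<phi> \<longleftrightarrow> (\<forall>C. compactin (mtop E) C \<longrightarrow>
      finite {g \<in> carrier G. pact \<phi> g ` C \<inter> C \<noteq> {}})"

definition cocompact_on :: "('v \<Rightarrow> 'v \<Rightarrow> bool) \<Rightarrow> ('g \<Rightarrow> 'v \<Rightarrow> 'v) \<Rightarrow> 'g set \<Rightarrow> ('v set \<Rightarrow> real) set \<Rightarrow> bool" where
  "cocompact_on E \<phi> A Y \<longleftrightarrow> (\<exists>C. compactin (mtop E) C \<and> C \<subseteq> Y \<and> Y \<subseteq> (\<Union>g\<in>A. pact \<phi> g ` C))"

definition wimg :: "('g \<Rightarrow> 'v \<Rightarrow> 'v) \<Rightarrow> 'g \<Rightarrow> 'v set set \<Rightarrow> 'v set set" where
  "wimg \<phi> g W = (\<lambda>h. \<phi> g ` h) ` W"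

text \<open>The wall of the quotient X/K that is the image of the wall W (its K-orbit).\<close>
definition Wbar :: "('g \<Rightarrow> 'v \<Rightarrow> 'v) \<Rightarrow> 'g set \<Rightarrow> 'v set set \<Rightarrow> 'v set set set" where
  "Wbar \<phi> K W = {wimg \<phi> k W | k. k \<in> K}"

definition VGamma :: "('v \<Rightarrow> 'v \<Rightarrow> bool) \<Rightarrow> ('g \<Rightarrow> 'v \<Rightarrow> 'v) \<Rightarrow> 'g set \<Rightarrow> 'v set set set set" where
  "VGamma E \<phi> K = Wbar \<phi> K ` walls E"

definition qdist :: "('v \<Rightarrow> 'v \<Rightarrow> bool) \<Rightarrow> 'v set set set \<Rightarrow> 'v set set set \<Rightarrow> real" where
  "qdist E O1 O2 = Inf {wdist E W1 W2 | W1 W2. W1 \<in> O1 \<and> W2 \<in> O2}"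

definition GammaRel :: "('v \<Rightarrow> 'v \<Rightarrow> bool) \<Rightarrow> ('g \<Rightarrow> 'v \<Rightarrow> 'v) \<Rightarrow> 'g set \<Rightarrow> real \<Rightarrow> ('v set set set \<times> 'v set set set) set" where
  "GammaRel E \<phi> K R = {(O1, O2). O1 \<in> VGamma E \<phi> K \<and> O2 \<in> VGamma E \<phi> K \<and> O1 \<noteq> O2 \<and> qdist E O1 O2 \<le> R}"

definition gball :: "('v \<Rightarrow> 'v \<Rightarrow> bool) \<Rightarrow> ('g \<Rightarrow> 'v \<Rightarrow> 'v) \<Rightarrow> 'g set \<Rightarrow> real \<Rightarrow> nat \<Rightarrow> 'v set set set \<Rightarrow> 'v set set set set" where
  "gball E \<phi> K R r U = {U'. \<exists>n\<le>r. (U, U') \<in> (GammaRel E \<phi> K R) ^^ n}"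

text \<open>Proper colourings C_m(Gamma); maps are extended by 0 outside V(Gamma).\<close>
definition Col :: "('v \<Rightarrow> 'v \<Rightarrow> bool) \<Rightarrow> ('g \<Rightarrow> 'v \<Rightarrow> 'v) \<Rightarrow> 'g set \<Rightarrow> real \<Rightarrow> nat \<Rightarrow> ('v set set set \<Rightarrow> nat) set" where
  "Col E \<phi> K R m = {c. (\<forall>U\<in>VGamma E \<phi> K. c U \<in> {1..m}) \<and> (\<forall>U. U \<notin> VGamma E \<phi> K \<longrightarrow> c U = 0) \<and>
      (\<forall>(O1, O2)\<in>GammaRel E \<phi> K R. c O1 \<noteq> c O2)}"

definition cact :: "('g, 'b) monoid_scheme \<Rightarrow> ('g \<Rightarrow> 'v \<Rightarrow> 'v) \<Rightarrow> 'g \<Rightarrow> ('v set set set \<Rightarrow> nat) \<Rightarrow> ('v set set set \<Rightarrow> nat)" where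
  "cact G \<phi> g c = (\<lambda>U. c (wimg \<phi> (inv\<^bsub>G\<^esub> g) ` U))"

definition cls :: "('v \<Rightarrow> 'v \<Rightarrow> bool) \<Rightarrow> ('g \<Rightarrow> 'v \<Rightarrow> 'v) \<Rightarrow> 'g set \<Rightarrow> real \<Rightarrow> nat \<Rightarrow> ('v set set set \<Rightarrow> nat) \<Rightarrow> 'v set set \<Rightarrow> ('v set set set \<Rightarrow> nat) set" where
  "cls E \<phi> K R k c W = {c' \<in> Col E \<phi> K R (k + 1).
      \<forall>U\<in>gball E \<phi> K R (c (Wbar \<phi> K W)) (Wbar \<phi> K W). c' U = c U}"

end

theory Submission imports Defs begin

context
  fixes E :: "'v \<Rightarrow> 'v \<Rightarrow> bool"
  assumes MG: "median_graph E"
begin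

lemma mg_sym: "E x y \<Longrightarrow> E y x" using MG unfolding median_graph_def by blast
lemma mg_irr: "\<not> E x x" using MG unfolding median_graph_def by blast
lemma mg_conn: "\<exists>n. (a,b) \<in> Erel E ^^ n" using MG unfolding median_graph_def by blast
lemma mg_med_ex: "\<exists>m. gdist E a m + gdist E m b = gdist E a b \<and>
                    gdist E b m + gdist E m c = gdist E b c \<and>
                    gdist E a m + gdist E m c = gdist E a c"
  using MG unfolding median_graph_def by blast
lemma mg_med_un:
  assumes "gdist E a m + gdist E m b = gdist E a b \<and>
                    gdist E b m + gdist E m c = gdist E b c \<and>
                    gdist E a m + gdist E m c = gdist E a c"
  and "gdist E a m' + gdist E m' b = gdist E a b \<and>
                    gdist E b m' + gdist E m' c = gdist E b c \<and>
                    gdist E a m' + gdist E m' c = gdist E a c"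
  shows "m = m'"
proof -
  have "\<exists>!m. gdist E a m + gdist E m b = gdist E a b \<and>
                    gdist E b m + gdist E m c = gdist E b c \<and>
                    gdist E a m + gdist E m c = gdist E a c"
    using MG unfolding median_graph_def by blast
  then show ?thesis using assms by blast
qed

lemma relpow_sym: "(a,b) \<in> Erel E ^^ n \<Longrightarrow> (b,a) \<in> Erel E ^^ n"
proof (induction n arbitrary: a b)
  case 0
  then show ?case by simp
next
  case (Suc n)
  then obtain c where "(a,c) \<in> Erel E ^^ n" "(c,b) \<in> Erel E" by auto
  then have "(c,a) \<in> Erel E ^^ n" "(b,c) \<in> Erel E"
    using Suc.IH mg_sym by (auto simp: Erel_def)
  then show ?case by (meson relpow_Suc_I2)
qed

lemma gd_in: "(a,b) \<in> Erel E ^^ gdist E a b"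
  unfolding gdist_def using mg_conn by (rule LeastI_ex)

lemma gd_le: "(a,b) \<in> Erel E ^^ n \<Longrightarrow> gdist E a b \<le> n"
  unfolding gdist_def by (rule Least_le)

lemma gd_refl[simp]: "gdist E a a = 0"
  using gd_le[of a a 0] by simp

lemma gd_zero: "gdist E a b = 0 \<Longrightarrow> a = b"
  using gd_in[of a b] by simp

lemma gd_sym: "gdist E a b = gdist E b a"
  using gd_le[OF relpow_sym[OF gd_in[of a b]]] gd_le[OF relpow_sym[OF gd_in[of b a]]] by simp

lemma gd_tri: "gdist E a c \<le> gdist E a b + gdist E b c"
proof -
  have "(a,c) \<in> Erel E ^^ gdist E a b O Erel E ^^ gdist E b c"
    using gd_in[of a b] gd_in[of b c] by blast
  then have "(a,c) \<in> Erel E ^^ (gdist E a b + gdist E b c)" by (simp add: relpow_add)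
  then show ?thesis by (rule gd_le)
qed

lemma gd_edge: "E a b \<Longrightarrow> gdist E a b = 1"
proof -
  assume e: "E a b"
  have "(a,b) \<in> Erel E ^^ 1" using e by (simp add: Erel_def)
  then have "gdist E a b \<le> 1" by (rule gd_le)
  moreover have "gdist E a b \<noteq> 0" using gd_zero e mg_irr by blast
  ultimately show ?thesis by simp
qed

lemma gd_step: "gdist E a b = Suc n \<Longrightarrow> \<exists>c. E a c \<and> gdist E c b = n"
proof -
  assume h: "gdist E a b = Suc n"
  have "(a,b) \<in> Erel E ^^ Suc n" using gd_in[of a b] h by simp
  then obtain c where ac: "(a,c) \<in> Erel E" and cb: "(c,b) \<in> Erel E ^^ n"
    using relpow_Suc_D2 by metis
  have "gdist E c b \<le> n" using cb by (rule gd_le)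
  moreover have "gdist E a b \<le> gdist E a c + gdist E c b" by (rule gd_tri)
  moreover have "gdist E a c = 1" using ac gd_edge by (simp add: Erel_def)
  ultimately show ?thesis using ac h by (auto simp: Erel_def)
qed

lemma gd_one: "gdist E a b = 1 \<Longrightarrow> E a b"
  using gd_step[of a b 0] gd_zero by auto

lemma gd_adj: "E a b \<Longrightarrow> gdist E v b \<le> gdist E v a + 1"
  using gd_tri[of v b a] gd_edge[of a b] gd_sym[of a b] by simp

lemma bip: "E a b \<Longrightarrow> gdist E v a \<noteq> gdist E v b"
proof
  assume e: "E a b" and eq: "gdist E v a = gdist E v b"
  obtain m where m: "gdist E a m + gdist E m b = gdist E a b \<and>
                    gdist E b m + gdist E m v = gdist E b v \<and>
                    gdist E a m + gdist E m v = gdist E a v"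
    using mg_med_ex by blast
  have ab: "gdist E a b = 1" using e gd_edge by simp
  then have "gdist E a m = 0 \<or> gdist E m b = 0" using m by arith
  then show False
  proof
    assume "gdist E a m = 0"
    then have "m = a" using gd_zero by metis
    then show False using m ab eq gd_sym[of a v] gd_sym[of b v] gd_sym[of b a] by simp
  next
    assume "gdist E m b = 0"
    then have "m = b" using gd_zero by metis
    then show False using m ab eq gd_sym[of a v] gd_sym[of b v] by simp
  qed
qed

lemma bip2: "E a b \<Longrightarrow> gdist E v b = gdist E v a + 1 \<or> gdist E v a = gdist E v b + 1"
  using bip[of a b v] gd_adj[of a b v] gd_adj[of b a v] mg_sym[of a b] by linarith

lemma gd2: "E x y \<Longrightarrow> E x z \<Longrightarrow> y \<noteq> z \<Longrightarrow> \<not> E y z \<Longrightarrow> gdist E y z = 2"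
proof -
  assume a: "E x y" "E x z" "y \<noteq> z" "\<not> E y z"
  have "gdist E y z \<le> gdist E y x + gdist E x z" by (rule gd_tri)
  then have "gdist E y z \<le> 2" using a gd_edge mg_sym by simp
  moreover have "gdist E y z \<noteq> 0" using a gd_zero by blast
  moreover have "gdist E y z \<noteq> 1" using a gd_one by blast
  ultimately show ?thesis by simp
qed

lemma QC: assumes "gdist E u y = gdist E u z" "E x y" "E x z" "y \<noteq> z"
  shows "\<exists>w. E y w \<and> E z w \<and> gdist E u w + 1 = gdist E u y"
proof -
  have nyz: "\<not> E y z" using bip[of y z u] assms by auto
  have yz: "gdist E y z = 2" using gd2 assms nyz by blast
  obtain m where m: "gdist E y m + gdist E m z = gdist E y z \<and>
                    gdist E z m + gdist E m u = gdist E z u \<and>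
                    gdist E y m + gdist E m u = gdist E y u"
    using mg_med_ex by blast
  have "gdist E y m = gdist E z m" using m assms gd_sym[of u y] gd_sym[of u z] by simp
  then have "gdist E y m = 1" "gdist E z m = 1" using m yz gd_sym[of m z] by auto
  then show ?thesis using gd_one m gd_sym[of u y] gd_sym[of u m] by (intro exI[of _ m]) auto
qed


lemma gd_lip: "E x y \<Longrightarrow> gdist E x v \<le> gdist E y v + 1"
  using gd_tri[of x v y] gd_edge[of x y] by simp

lemma hs_compl: assumes "E a b" shows "hs E b a = - hs E a b"
proof -
  have "\<And>v. gdist E v b < gdist E v a \<longleftrightarrow> \<not> gdist E v a < gdist E v b"
    using bip[OF assms] by (meson linorder_neqE_nat not_less_iff_gr_or_eq)
  then show ?thesis by (auto simp: hs_def)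
qed

lemma claimA:
  assumes ab: "E a b"
  shows "E w z \<Longrightarrow> w \<in> hs E a b \<Longrightarrow> z \<notin> hs E a b \<Longrightarrow> gdist E w a = k \<Longrightarrow> hs E a b \<subseteq> hs E w z"
proof (induction k arbitrary: w z)
  case 0
  then have wa: "w = a" using gd_zero by metis
  then have "gdist E z a = 1" using 0 gd_edge[OF mg_sym[of w z]] by simp
  moreover have "gdist E z a \<noteq> gdist E z b" using bip ab by blast
  ultimately have "gdist E z b = 0" using 0 by (simp add: hs_def)
  then have "z = b" using gd_zero by metis
  then show ?case using wa by simp
next
  case (Suc k)
  have wz: "E w z" and zw: "E z w" using Suc mg_sym by auto
  have wa: "gdist E w a = Suc k" using Suc by simp
  have wb: "gdist E w b = Suc k + 1" using Suc bip2[OF ab, of w] by (auto simp: hs_def)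
  have zab: "gdist E z a = gdist E z b + 1" using Suc bip2[OF ab, of z] by (auto simp: hs_def)
  have "gdist E z a \<le> gdist E w a + 1" "gdist E w b \<le> gdist E z b + 1"
    using gd_lip[OF zw] gd_lip[OF wz] by auto
  then have za: "gdist E z a = Suc k + 1" and zb: "gdist E z b = Suc k" using wa wb zab by auto
  obtain z' where zz': "E z z'" and z'b: "gdist E z' b = k" using gd_step[OF zb] by blast
  have z'z: "E z' z" using zz' mg_sym by blast
  have "gdist E z' a \<le> gdist E z' b + gdist E b a" by (rule gd_tri)
  moreover have "gdist E b a = 1" using ab mg_sym gd_edge by blast
  moreover have "gdist E z a \<le> gdist E z' a + 1" using gd_lip[OF zz'] by simp
  ultimately have z'a: "gdist E z' a = Suc k" using za z'b by simp
  have z'n: "z' \<notin> hs E a b" using z'a z'b by (simp add: hs_def)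
  have wnz': "w \<noteq> z'" using z'n Suc by blast
  obtain w' where ww': "E w w'" and z'w': "E z' w'" and w'a0: "gdist E a w' + 1 = gdist E a w"
    using QC[of a w z' z] zw zz' wnz' gd_sym[of a w] gd_sym[of a z'] wa z'a by auto
  have w'a: "gdist E w' a = k" using w'a0 wa gd_sym[of a w] gd_sym[of a w'] by simp
  have "gdist E w b \<le> gdist E w' b + 1" using gd_lip[OF ww'] by simp
  then have w'h: "w' \<in> hs E a b" using wb w'a by (simp add: hs_def)
  have w'z': "E w' z'" using z'w' mg_sym by blast
  have IH: "hs E a b \<subseteq> hs E w' z'" using Suc.IH[OF w'z' w'h z'n w'a] .
  show ?case
  proof
    fix u assume uh: "u \<in> hs E a b"
    show "u \<in> hs E w z"
    proof (rule ccontr)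
      assume "u \<notin> hs E w z"
      then have uwz: "gdist E u w = gdist E u z + 1" using bip2[OF wz, of u] by (auto simp: hs_def)
      have h1: "gdist E u w' < gdist E u z'" using IH uh by (auto simp: hs_def)
      have "gdist E u w' = gdist E u w + 1 \<or> gdist E u w = gdist E u w' + 1" using bip2[OF ww'] by blast
      moreover have "gdist E u z' = gdist E u z + 1 \<or> gdist E u z = gdist E u z' + 1" using bip2[OF zz'] by blast
      moreover have "gdist E u z' = gdist E u w' + 1 \<or> gdist E u w' = gdist E u z' + 1" using bip2[OF w'z'] by blast
      ultimately have uw': "gdist E u w' = gdist E u z" and uz': "gdist E u z' = gdist E u z + 1"
        using uwz h1 by (elim disjE; linarith)+
      have znw': "z \<noteq> w'" using Suc.prems w'h by blast
      have nzw': "\<not> E z w'" using bip[of z w' u] uw' by auto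
      have zw'2: "gdist E z w' = 2" using gd2[OF wz ww' znw' nzw'] .
      obtain m where m: "gdist E z m + gdist E m w' = gdist E z w' \<and>
                    gdist E w' m + gdist E m u = gdist E w' u \<and>
                    gdist E z m + gdist E m u = gdist E z u"
        using mg_med_ex by blast
      have "gdist E z m = gdist E w' m" using m uw' gd_sym[of u w'] gd_sym[of u z] by simp
      then have zm: "gdist E z m = 1" and w'm: "gdist E w' m = 1" using m zw'2 gd_sym[of m w'] by auto
      have um: "gdist E u m + 1 = gdist E u z" using m zm gd_sym[of u z] gd_sym[of u m] by simp
      have Ezm: "E z m" and Ew'm: "E w' m" using zm w'm gd_one by auto
      have "\<not> E w z'" using bip[of w z' u] uwz uz' by auto
      then have d1: "gdist E w z' = 2" using gd2[OF zw zz' wnz'] by blast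
      have "\<not> E z' m" using gd_lip[of z' m u] gd_sym[of z' u] gd_sym[of m u] uz' um by auto
      moreover have "z' \<noteq> m" using uz' um by auto
      ultimately have d2: "gdist E z' m = 2" using gd2[OF zz' Ezm] by blast
      have "\<not> E w m" using gd_lip[of w m u] gd_sym[of w u] gd_sym[of m u] uwz um by auto
      moreover have "w \<noteq> m" using uwz um by auto
      ultimately have d3: "gdist E w m = 2" using gd2[OF zw Ezm] by blast
      have "z = w'"
        apply (rule mg_med_un[of w z z' m w'])
        using d1 d2 d3 zm w'm gd_edge[OF wz] gd_edge[OF zz'] gd_edge[OF z'z] gd_edge[OF ww'] gd_edge[OF w'z'] gd_edge[OF z'w']
        by simp_all
      then show False using znw' by simp
    qed
  qed
qed

lemma goalA:
  assumes "E a b" "E c e" "a \<in> hs E c e" "b \<notin> hs E c e"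
  shows "hs E a b = hs E c e"
proof -
  have 1: "hs E c e \<subseteq> hs E a b" using claimA[OF assms(2) assms(1) assms(3) assms(4)] by blast
  have ce: "hs E e c = - hs E c e" using hs_compl assms(2) by blast
  have ba: "hs E b a = - hs E a b" using hs_compl assms(1) by blast
  have b1: "b \<in> hs E e c" using assms(4) ce by blast
  have a1: "a \<notin> hs E e c" using assms(3) ce by blast
  have 2: "hs E e c \<subseteq> hs E b a"
    using claimA[OF mg_sym[OF assms(2)] mg_sym[OF assms(1)] b1 a1 refl] .
  show ?thesis using 1 2 ce ba by blast
qed


lemma HS_iff: "h \<in> HS E \<longleftrightarrow> (\<exists>a b. h = hs E a b \<and> E a b)"
  by (auto simp: HS_def)

lemma hs_HS: "E a b \<Longrightarrow> hs E a b \<in> HS E"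
  by (auto simp: HS_def)

lemma hs_self: "a \<in> hs E a b \<longleftrightarrow> a \<noteq> b"
  using gd_zero[of a b] by (auto simp: hs_def)

lemma wall_of_hs: "E a b \<Longrightarrow> wall_of (hs E a b) = wallE E a b"
  using hs_compl[of a b] by (auto simp: wall_of_def wallE_def)

lemma wallE_sym: "wallE E a b = wallE E b a"
  by (auto simp: wallE_def)

lemma flip:
  assumes ab: "E a b" and h: "h \<in> HS E"
  shows "b \<in> h \<longleftrightarrow> ((a \<in> h) \<noteq> (wall_of h = wallE E a b))"
proof -
  obtain c e where ce: "E c e" and hce: "h = hs E c e" using h HS_iff by blast
  have anb: "a \<noteq> b" using ab mg_irr by blast
  have ba: "E b a" using ab mg_sym by blast
  show ?thesis
  proof (cases "wall_of h = wallE E a b")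
    case True
    then have "h \<in> wallE E a b" by (metis insertI1 wall_of_def)
    then have "h = hs E a b \<or> h = hs E b a" by (simp add: wallE_def)
    then show ?thesis using True hs_self[of a b] hs_self[of b a] hs_compl[OF ab] anb by auto
  next
    case False
    have "b \<in> h \<longleftrightarrow> a \<in> h"
    proof (rule ccontr)
      assume "(b \<in> h) \<noteq> (a \<in> h)"
      then have "(a \<in> h \<and> b \<notin> h) \<or> (b \<in> h \<and> a \<notin> h)" by blast
      then show False
      proof
        assume "a \<in> h \<and> b \<notin> h"
        then have "hs E a b = h" using goalA[OF ab ce] hce by simp
        then show False using False wall_of_hs[OF ab] by simp
      next
        assume "b \<in> h \<and> a \<notin> h"
        then have "hs E b a = h" using goalA[OF ba ce] hce by simp
        then show False using False wall_of_hs[OF ba] wallE_sym[of b a] by simp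
      qed
    qed
    then show ?thesis using False by simp
  qed
qed

lemma wallE_walls: "E a b \<Longrightarrow> wallE E a b \<in> walls E"
  by (auto simp: walls_def)

lemma cube1: assumes ab: "E a b" shows "cube E a {wallE E a b}"
  unfolding cube_def
proof (intro conjI allI impI)
  show "finite {wallE E a b}" by simp
  show "{wallE E a b} \<subseteq> walls E" using wallE_walls[OF ab] by simp
  fix T assume "T \<subseteq> {wallE E a b}"
  then have "T = {} \<or> T = {wallE E a b}" by blast
  then show "\<exists>u. \<forall>h\<in>HS E. (u \<in> h) = ((a \<in> h) \<noteq> (wall_of h \<in> T))"
  proof
    assume "T = {}" then show ?thesis by auto
  next
    assume "T = {wallE E a b}" then show ?thesis using flip[OF ab] by (intro exI[of _ b]) auto
  qed
qed

lemma cube0: "cube E a {}"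
  by (auto simp: cube_def)

lemma in_cube0: "in_cube E a {} (vpt E a)"
  by (auto simp: in_cube_def vpt_def)

lemma vpt_Pts: "vpt E a \<in> Pts E"
  using cube0 in_cube0 by (auto simp: Pts_def)

definition mid :: "('v \<Rightarrow> 'v \<Rightarrow> bool) \<Rightarrow> 'v \<Rightarrow> 'v \<Rightarrow> 'v set \<Rightarrow> real" where
  "mid E' a b = (\<lambda>h. if h \<in> HS E' \<and> (h = hs E' a b \<or> h = hs E' b a) then 1/2 else vpt E' a h)"

lemma wall_of_eq: assumes ab: "E a b" and h: "h \<in> HS E"
  shows "wall_of h = wallE E a b \<longleftrightarrow> (h = hs E a b \<or> h = hs E b a)"
proof
  assume "wall_of h = wallE E a b"
  then have "h \<in> wallE E a b" by (metis insertI1 wall_of_def)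
  then show "h = hs E a b \<or> h = hs E b a" by (simp add: wallE_def)
next
  assume "h = hs E a b \<or> h = hs E b a"
  then show "wall_of h = wallE E a b"
    using wall_of_hs[OF ab] wall_of_hs[OF mg_sym[OF ab]] wallE_sym[of b a] by auto
qed

lemma in_cube_mid: assumes ab: "E a b" shows "in_cube E a {wallE E a b} (mid E a b)"
proof -
  have ba: "E b a" using ab mg_sym by blast
  have c1: "- hs E a b = hs E b a" "- hs E b a = hs E a b" using hs_compl[OF ab] by auto
  show ?thesis unfolding in_cube_def
  proof (intro conjI allI impI ballI)
    fix h assume "h \<notin> HS E" then show "mid E a b h = 0" by (simp add: mid_def vpt_def)
  next
    fix h assume h: "h \<in> HS E"
    show "if wall_of h \<in> {wallE E a b} then 0 \<le> mid E a b h \<and> mid E a b h \<le> 1 \<and> mid E a b (- h) = 1 - mid E a b h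
          else mid E a b h = vpt E a h"
      using wall_of_eq[OF ab h] h c1 hs_HS[OF ab] hs_HS[OF ba] by (auto simp: mid_def)
  qed
qed

lemma in_cube_vpt: assumes ab: "E a b" shows "in_cube E a {wallE E a b} (vpt E a)"
proof -
  have ba: "E b a" using ab mg_sym by blast
  have c1: "- hs E a b = hs E b a" "- hs E b a = hs E a b" using hs_compl[OF ab] by auto
  show ?thesis unfolding in_cube_def
  proof (intro conjI allI impI ballI)
    fix h assume "h \<notin> HS E" then show "vpt E a h = 0" by (simp add: vpt_def)
  next
    fix h assume h: "h \<in> HS E"
    show "if wall_of h \<in> {wallE E a b} then 0 \<le> vpt E a h \<and> vpt E a h \<le> 1 \<and> vpt E a (- h) = 1 - vpt E a h
          else vpt E a h = vpt E a h"
      using wall_of_eq[OF ab h] h c1 hs_HS[OF ab] hs_HS[OF ba] by (auto simp: vpt_def)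
  qed
qed

lemma mid_hyp: assumes ab: "E a b" shows "mid E a b \<in> hyp E (wallE E a b)"
proof -
  have "mid E a b \<in> Pts E" using cube1[OF ab] in_cube_mid[OF ab] by (auto simp: Pts_def)
  then show ?thesis using hs_HS[OF ab] hs_HS[OF mg_sym[OF ab]] by (auto simp: hyp_def wallE_def mid_def)
qed

lemma same_cube_mid: assumes ab: "E a b" shows "same_cube E (mid E a b) (vpt E a)" "same_cube E (vpt E a) (mid E a b)"
  using cube1[OF ab] in_cube_mid[OF ab] in_cube_vpt[OF ab] unfolding same_cube_def by blast+

lemma cdist_sym: "cdist E p q = cdist E q p"
  unfolding cdist_def by (simp add: eq_commute power2_commute)

lemma cdist_nonneg: "cdist E p q \<ge> 0"
  unfolding cdist_def by (simp add: sum_nonneg)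

lemma cdist_mid: assumes ab: "E a b" shows "cdist E (mid E a b) (vpt E a) = 1/2"
proof -
  have ba: "E b a" using ab mg_sym by blast
  have anb: "a \<noteq> b" using ab mg_irr by blast
  have S: "{h \<in> HS E. mid E a b h \<noteq> vpt E a h} = {hs E a b, hs E b a}"
    using hs_HS[OF ab] hs_HS[OF ba] by (auto simp: mid_def vpt_def)
  have ne: "hs E a b \<noteq> hs E b a" using hs_self[of a b] hs_compl[OF ab] anb by auto
  have t: "\<And>h. h \<in> {hs E a b, hs E b a} \<Longrightarrow> (mid E a b h - vpt E a h)^2 = 1/4"
    using hs_HS[OF ab] hs_HS[OF ba] by (auto simp: mid_def vpt_def power2_eq_square)
  have "(\<Sum>h\<in>{hs E a b, hs E b a}. (mid E a b h - vpt E a h)^2) = (\<Sum>h\<in>{hs E a b, hs E b a}. 1/4)"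
    by (rule sum.cong[OF refl t])
  also have "\<dots> = 1/2" using ne by simp
  finally have sm: "(\<Sum>h\<in>{hs E a b, hs E b a}. (mid E a b h - vpt E a h)^2) = 1/2" .
  have "sqrt (1/4) = (1/2::real)" by (rule real_sqrt_unique) (auto simp: power2_eq_square)
  then show ?thesis unfolding cdist_def S sm by simp
qed

lemma chain_len_nonneg: "chain_len E ps \<ge> 0"
  unfolding chain_len_def by (simp add: sum_nonneg cdist_nonneg)

lemma cdX_le: "is_chain E p q ps \<Longrightarrow> cdX E p q \<le> chain_len E ps"
  unfolding cdX_def
  by (rule cInf_lower) (auto intro: bdd_belowI[of _ 0] chain_len_nonneg)

lemma cdX_mid: assumes ab: "E a b" and ac: "E a c"
  shows "cdX E (mid E a b) (mid E a c) \<le> 1"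
proof -
  let ?ps = "[mid E a b, vpt E a, mid E a c]"
  have "is_chain E (mid E a b) (mid E a c) ?ps"
    unfolding is_chain_def
  proof (intro conjI allI impI)
    fix i assume "i < length ?ps - 1"
    then have "i = 0 \<or> i = 1" by auto
    then show "same_cube E (?ps ! i) (?ps ! Suc i)"
      using same_cube_mid[OF ab] same_cube_mid[OF ac] by auto
  qed auto
  then have "cdX E (mid E a b) (mid E a c) \<le> chain_len E ?ps" by (rule cdX_le)
  also have "chain_len E ?ps = cdist E (mid E a b) (vpt E a) + cdist E (vpt E a) (mid E a c)"
    by (simp add: chain_len_def numeral_2_eq_2)
  also have "\<dots> = 1" using cdist_mid[OF ab] cdist_mid[OF ac] cdist_sym[of "vpt E a"] by simp
  finally show ?thesis .
qed

lemma cdX_refl: "cdX E p p = 0"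
proof -
  have "is_chain E p p [p]" by (simp add: is_chain_def)
  moreover have "chain_len E [p] = 0" by (simp add: chain_len_def)
  ultimately show ?thesis unfolding cdX_def
    by (intro cInf_eq_minimum) (auto intro: chain_len_nonneg)
qed

end

definition LB :: real where "LB = min 0 (Inf {})"

lemma Inf_ge_LB: "(\<And>x. x \<in> X \<Longrightarrow> LB \<le> x) \<Longrightarrow> LB \<le> Inf (X::real set)"
  by (cases "X = {}") (auto simp: LB_def intro: cInf_greatest)

lemma chain_len_nonneg': "chain_len E ps \<ge> 0"
  unfolding chain_len_def cdist_def by (simp add: sum_nonneg)

lemma cdX_LB: "LB \<le> cdX E p q"
  unfolding cdX_def
  apply (rule Inf_ge_LB)
  apply clarify
  apply (rule order_trans[OF _ chain_len_nonneg'])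
  apply (simp add: LB_def)
  done

lemma wdist_LB: "LB \<le> wdist E W1 W2"
  unfolding wdist_def by (rule Inf_ge_LB) (auto intro: cdX_LB)

lemma wdist_le: "p \<in> hyp E W1 \<Longrightarrow> q \<in> hyp E W2 \<Longrightarrow> wdist E W1 W2 \<le> cdX E p q"
  unfolding wdist_def by (rule cInf_lower) (auto intro: bdd_belowI[of _ LB] cdX_LB)

lemma qdist_le: "W1 \<in> O1 \<Longrightarrow> W2 \<in> O2 \<Longrightarrow> qdist E O1 O2 \<le> wdist E W1 W2"
  unfolding qdist_def by (rule cInf_lower) (auto intro: bdd_belowI[of _ LB] wdist_LB)

theorem lemma8p4:
  fixes G :: "'g monoid" and E :: "'v \<Rightarrow> 'v \<Rightarrow> bool" and \<phi> :: "'g \<Rightarrow> 'v \<Rightarrow> 'v"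
    and K H :: "'g set" and \<delta> R :: real and k j :: nat
    and Z :: "('v set \<Rightarrow> real) set" and c :: "'v \<Rightarrow> ('v set set set \<Rightarrow> nat)"
    and W :: "'v set set"
  assumes X_cat0: "median_graph E"
    and X_findim: "finite_dim E"
    and X_hyp: "hyperbolic E \<delta>"
    and G_grp: "group G"
    and G_act: "auto_action G E \<phi>"
    and G_proper: "proper_action G E \<phi>"
    and G_cocpt: "cocompact_on E \<phi> (carrier G) (Pts E)"
    and K_normal: "K \<lhd> G"
    and K_tf: "\<forall>g\<in>K. \<forall>n::nat. n > 0 \<and> g [^]\<^bsub>G\<^esub> n = \<one>\<^bsub>G\<^esub> \<longrightarrow> g = \<one>\<^bsub>G\<^esub>"
    and walls_compact: "\<forall>V\<in>walls E. \<exists>C. compactin (mtop E) C \<and> hyp E V \<subseteq> (\<Union>g\<in>K. pact \<phi> g ` C)"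
    and walls_embedded: "\<forall>V\<in>walls E. \<forall>g\<in>K. wimg \<phi> g V = V \<or> hyp E (wimg \<phi> g V) \<inter> hyp E V = {}"
    and R_bound: "R \<ge> \<delta> + 2 * sqrt (real (dimX E))"
    and R_sep: "\<forall>W1\<in>walls E. \<forall>W2\<in>walls E. W1 \<noteq> W2 \<and> wdist E W1 W2 < R \<longrightarrow> Wbar \<phi> K W1 \<noteq> Wbar \<phi> K W2"
    and k_deg: "\<forall>U\<in>VGamma E \<phi> K. finite {U'. (U, U') \<in> GammaRel E \<phi> K R} \<and>
                   card {U'. (U, U') \<in> GammaRel E \<phi> K R} \<le> k"
    and j_range: "j \<le> k + 1"
    and Z_half: "\<exists>F\<subseteq>HS E. Z = Pts E \<inter> \<Inter> (ghalf E ` F)"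
    and Z_vertex: "\<exists>v. vpt E v \<in> Z"
    and H_sub: "subgroup H G"
    and H_pres: "\<forall>g\<in>H. pact \<phi> g ` Z = Z"
    and H_free: "\<forall>g\<in>H. \<forall>p\<in>Z. pact \<phi> g p = p \<longrightarrow> g = \<one>\<^bsub>G\<^esub>"
    and H_cocpt: "cocompact_on E \<phi> H Z"
    and c_col: "\<forall>x. vpt E x \<in> Z \<longrightarrow> c x \<in> Col E \<phi> K R (k + 1)"
    and c_equiv: "\<forall>g\<in>H. \<forall>x. vpt E x \<in> Z \<longrightarrow> c (\<phi> g x) = cact G \<phi> g (c x)"
    and P1: "\<forall>x y. E x y \<and> vpt E x \<in> Z \<and> vpt E y \<in> Z \<longrightarrow>
               cls E \<phi> K R k (c x) (wallE E x y) = cls E \<phi> K R k (c y) (wallE E x y)"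
    and P2: "\<forall>x y. E x y \<and> vpt E x \<in> Z \<longrightarrow>
               (vpt E y \<in> Z \<longleftrightarrow> c x (Wbar \<phi> K (wallE E x y)) > j)"
    and W_bdry: "\<exists>x y. E x y \<and> vpt E x \<in> Z \<and> vpt E y \<notin> Z \<and> W = wallE E x y"
  shows "\<forall>x y x' y'. E x y \<and> vpt E x \<in> Z \<and> vpt E y \<notin> Z \<and> wallE E x y = W \<and>
           E x' y' \<and> vpt E x' \<in> Z \<and> vpt E y' \<notin> Z \<and> wallE E x' y' = W \<longrightarrow>
           cls E \<phi> K R k (c x) W = cls E \<phi> K R k (c x') W \<and>
           c x (Wbar \<phi> K W) = c x' (Wbar \<phi> K W)"
proof -
  have MG: "median_graph E" by (rule X_cat0)
  obtain F where FHS: "F \<subseteq> HS E" and Zdef: "Z = Pts E \<inter> \<Inter> (ghalf E ` F)" using Z_half by blast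
  have ZV: "\<And>v. vpt E v \<in> Z \<longleftrightarrow> (\<forall>h\<in>F. v \<in> h)"
  proof -
    fix v
    have "\<And>h. h \<in> F \<Longrightarrow> vpt E v \<in> ghalf E h \<longleftrightarrow> v \<in> h"
      using FHS vpt_Pts[OF MG, of v] by (auto simp: ghalf_def vpt_def)
    then show "vpt E v \<in> Z \<longleftrightarrow> (\<forall>h\<in>F. v \<in> h)" using vpt_Pts[OF MG, of v] Zdef by auto
  qed
  have Zsub: "\<And>x y v. E x y \<Longrightarrow> vpt E x \<in> Z \<Longrightarrow> vpt E y \<notin> Z \<Longrightarrow> vpt E v \<in> Z \<Longrightarrow> v \<in> hs E x y"
  proof -
    fix x y v assume xy: "E x y" and xZ: "vpt E x \<in> Z" and yZ: "vpt E y \<notin> Z" and vZ: "vpt E v \<in> Z"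
    obtain h where hF: "h \<in> F" and yh: "y \<notin> h" using yZ ZV by blast
    have xh: "x \<in> h" and vh: "v \<in> h" using hF xZ vZ ZV by auto
    obtain a b where ab: "E a b" and hab: "h = hs E a b" using hF FHS HS_iff[OF MG] by blast
    have "hs E x y = h" using goalA[OF MG xy ab] xh yh hab by simp
    then show "v \<in> hs E x y" using vh by simp
  qed
  have oneK: "\<one>\<^bsub>G\<^esub> \<in> K" using K_normal normal_imp_subgroup subgroup.one_closed by blast
  have phi1: "\<phi> \<one>\<^bsub>G\<^esub> = id" using G_act by (simp add: auto_action_def)
  have WbarI: "\<And>V. V \<in> Wbar \<phi> K V"
  proof -
    fix V
    have "wimg \<phi> \<one>\<^bsub>G\<^esub> V = V" using phi1 by (simp add: wimg_def)
    then show "V \<in> Wbar \<phi> K V" using oneK unfolding Wbar_def by force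
  qed
  obtain x0 y0 where e0: "E x0 y0" using W_bdry by blast
  have delta0: "\<delta> \<ge> 0"
  proof -
    let ?P = "vpt E x0"
    let ?g = "\<lambda>s::real. ?P"
    have P: "?P \<in> Pts E" by (rule vpt_Pts[OF MG])
    have c0: "cdX E ?P ?P = 0" by (rule cdX_refl[OF MG])
    have geo: "geodesic E ?P ?P ?g" unfolding geodesic_def using P c0 by auto
    have "\<forall>x\<in>?g ` {0..cdX E ?P ?P}. \<exists>y\<in>?g ` {0..cdX E ?P ?P} \<union> ?g ` {0..cdX E ?P ?P}. cdX E x y \<le> \<delta>"
      using X_hyp P geo unfolding hyperbolic_def by blast
    then show ?thesis using c0 by auto
  qed
  have dim1: "dimX E \<ge> 1"
  proof -
    have "1 \<in> {card S | S. \<exists>v. cube E v S}" using cube1[OF MG e0] by force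
    then show ?thesis unfolding dimX_def
      using X_findim unfolding finite_dim_def by (rule cSup_upper)
  qed
  have R1: "R \<ge> 1"
  proof -
    have "sqrt (real (dimX E)) \<ge> 1" using dim1 by simp
    then show ?thesis using R_bound delta0 by linarith
  qed
  have local: "\<And>x u y. E x u \<Longrightarrow> E x y \<Longrightarrow> vpt E x \<in> Z \<Longrightarrow> vpt E u \<in> Z \<Longrightarrow> vpt E y \<notin> Z \<Longrightarrow>
       cls E \<phi> K R k (c x) (wallE E x y) = cls E \<phi> K R k (c u) (wallE E x y) \<and>
       c x (Wbar \<phi> K (wallE E x y)) = c u (Wbar \<phi> K (wallE E x y))"
  proof -
    fix x u y assume xu: "E x u" and xy: "E x y" and xZ: "vpt E x \<in> Z" and uZ: "vpt E u \<in> Z" and yZ: "vpt E y \<notin> Z"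
    define Wb where "Wb = Wbar \<phi> K (wallE E x y)"
    define Fb where "Fb = Wbar \<phi> K (wallE E x u)"
    have pF: "c x Fb > j" using P2 xu xZ uZ unfolding Fb_def by blast
    have pW: "\<not> c x Wb > j" using P2 xy xZ yZ unfolding Wb_def by blast
    have cuCol: "c u \<in> Col E \<phi> K R (k + 1)" using c_col uZ by blast
    have "c u \<in> cls E \<phi> K R k (c u) (wallE E x u)" using cuCol by (simp add: cls_def)
    then have "c u \<in> cls E \<phi> K R k (c x) (wallE E x u)" using P1 xu xZ uZ by metis
    then have agree: "\<And>U. U \<in> gball E \<phi> K R (c x Fb) Fb \<Longrightarrow> c u U = c x U"
      unfolding cls_def Fb_def by blast
    have qd: "qdist E Fb Wb \<le> R"
    proof -
      have "qdist E Fb Wb \<le> wdist E (wallE E x u) (wallE E x y)"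
        unfolding Fb_def Wb_def by (rule qdist_le[OF WbarI WbarI])
      also have "\<dots> \<le> cdX E (mid E x u) (mid E x y)"
        by (rule wdist_le[OF mid_hyp[OF MG xu] mid_hyp[OF MG xy]])
      also have "\<dots> \<le> 1" by (rule cdX_mid[OF MG xu xy])
      finally show ?thesis using R1 by linarith
    qed
    have edge: "(Fb, Wb) \<in> GammaRel E \<phi> K R"
      unfolding GammaRel_def VGamma_def Fb_def Wb_def
      using wallE_walls[OF MG xu] wallE_walls[OF MG xy] qd pF pW
      by (auto simp: Fb_def Wb_def)
    have "Wb \<in> gball E \<phi> K R (c x Fb) Fb"
      unfolding gball_def using edge pF by (intro CollectI exI[of _ 1]) auto
    then have same: "c u Wb = c x Wb" using agree by blast
    have ball: "\<And>U. U \<in> gball E \<phi> K R (c x Wb) Wb \<Longrightarrow> U \<in> gball E \<phi> K R (c x Fb) Fb"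
    proof -
      fix U assume "U \<in> gball E \<phi> K R (c x Wb) Wb"
      then obtain n where n: "n \<le> c x Wb" and p: "(Wb, U) \<in> GammaRel E \<phi> K R ^^ n"
        unfolding gball_def by blast
      have "(Fb, U) \<in> GammaRel E \<phi> K R ^^ Suc n" using edge p by (rule relpow_Suc_I2)
      moreover have "Suc n \<le> c x Fb" using n pF pW by linarith
      ultimately show "U \<in> gball E \<phi> K R (c x Fb) Fb" unfolding gball_def by blast
    qed
    have "cls E \<phi> K R k (c x) (wallE E x y) = cls E \<phi> K R k (c u) (wallE E x y)"
      unfolding cls_def Wb_def[symmetric] using same ball agree by force
    then show "cls E \<phi> K R k (c x) (wallE E x y) = cls E \<phi> K R k (c u) (wallE E x y) \<and>
       c x (Wbar \<phi> K (wallE E x y)) = c u (Wbar \<phi> K (wallE E x y))"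
      using same unfolding Wb_def by simp
  qed
  have main: "\<And>n. \<forall>x y x' y'. gdist E x x' = n \<longrightarrow> E x y \<longrightarrow> E x' y' \<longrightarrow> vpt E x \<in> Z \<longrightarrow> vpt E x' \<in> Z \<longrightarrow>
      vpt E y \<notin> Z \<longrightarrow> vpt E y' \<notin> Z \<longrightarrow> hs E x y = hs E x' y' \<longrightarrow>
      cls E \<phi> K R k (c x) (wallE E x y) = cls E \<phi> K R k (c x') (wallE E x y) \<and>
      c x (Wbar \<phi> K (wallE E x y)) = c x' (Wbar \<phi> K (wallE E x y))"
  proof -
    fix n show "?thesis n"
    proof (induction n)
      case 0
      then show ?case using gd_zero[OF MG] by blast
    next
      case (Suc n)
      show ?case
      proof (intro allI impI)
        fix x y x' y'
        assume dxx': "gdist E x x' = Suc n" and xy: "E x y" and x'y': "E x' y'" and xZ: "vpt E x \<in> Z"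
          and x'Z: "vpt E x' \<in> Z" and yZ: "vpt E y \<notin> Z" and y'Z: "vpt E y' \<notin> Z" and hsq: "hs E x y = hs E x' y'"
        have yx: "E y x" and y'x': "E y' x'" using xy x'y' mg_sym[OF MG] by auto
        have x'A: "x' \<in> hs E x y" using Zsub xy xZ yZ x'Z by blast
        have dx'x: "gdist E x' x = Suc n" using dxx' gd_sym[OF MG, of x x'] by simp
        have dx'y: "gdist E x' y = Suc n + 1" using x'A dx'x bip2[OF MG xy, of x'] by (auto simp: hs_def)
        have hyx: "hs E y' x' = hs E y x" using hsq hs_compl[OF MG xy] hs_compl[OF MG x'y'] by simp
        have "y \<noteq> x" using xy mg_irr[OF MG] by blast
        have "y' \<noteq> x'" using x'y' mg_irr[OF MG] by blast
        then have "y' \<in> hs E y x" using hs_self[OF MG, of y' x'] hyx by simp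
        then have y'yx: "gdist E y' y < gdist E y' x" by (simp add: hs_def)
        have "x \<in> hs E x' y'" using hsq hs_self[OF MG, of x y] \<open>y \<noteq> x\<close> by auto
        then have "gdist E x x' < gdist E x y'" by (simp add: hs_def)
        then have dxy': "gdist E x y' = Suc n + 1" using dxx' bip2[OF MG x'y', of x] by auto
        have "gdist E y' x = gdist E y' y + 1" using y'yx bip2[OF MG xy, of y'] by auto
        then have dyy': "gdist E y y' = Suc n" using dxy' gd_sym[OF MG, of x y'] gd_sym[OF MG, of y y'] by simp
        obtain v where yv: "E y v" and dvy': "gdist E v y' = n" using gd_step[OF MG dyy'] by blast
        have vx: "v \<noteq> x" using dvy' dxy' by auto
        have "gdist E v x' \<le> gdist E v y' + gdist E y' x'" by (rule gd_tri[OF MG])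
        moreover have "gdist E y' x' = 1" using gd_edge[OF MG y'x'] .
        moreover have "gdist E y x' \<le> gdist E v x' + 1" using gd_lip[OF MG yv] .
        moreover have "gdist E y x' = Suc n + 1" using dx'y gd_sym[OF MG, of x' y] by simp
        ultimately have dvx': "gdist E v x' = Suc n" using dvy' by simp
        have "\<exists>w. E x w \<and> E v w \<and> gdist E x' w + 1 = gdist E x' x"
          using QC[OF MG, of x' x v y] dx'x dvx' gd_sym[OF MG, of x' v] yx yv vx by auto
        then obtain u where xu: "E x u" and vu: "E v u" and dx'u: "gdist E x' u + 1 = gdist E x' x"
          by blast
        have dux': "gdist E u x' = n" using dx'u dx'x gd_sym[OF MG, of x' u] by simp
        have "gdist E x y' \<le> gdist E u y' + 1" using gd_lip[OF MG xu] .
        then have uA: "u \<in> hs E x y" using hsq dux' dxy' by (simp add: hs_def)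
        have "gdist E v x' > gdist E v y'" using dvx' dvy' by simp
        then have "v \<in> hs E y' x'" by (simp add: hs_def)
        then have vA: "v \<notin> hs E x y" using hyx hs_compl[OF MG xy] by simp
        have uZ: "vpt E u \<in> Z"
        proof -
          have "\<forall>h\<in>F. u \<in> h"
          proof
            fix h assume hF: "h \<in> F"
            have xh: "x \<in> h" and x'h: "x' \<in> h" using hF xZ x'Z ZV by auto
            show "u \<in> h"
            proof (rule ccontr)
              assume uh: "u \<notin> h"
              obtain a b where ab: "E a b" and hab: "h = hs E a b" using hF FHS HS_iff[OF MG] by blast
              have "hs E x u = h" using goalA[OF MG xu ab] xh uh hab by simp
              then have "gdist E x' x < gdist E x' u" using x'h by (auto simp: hs_def)
              then show False using dx'u by simp
            qed
          qed
          then show ?thesis using ZV by blast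
        qed
        have vZ: "vpt E v \<notin> Z" using Zsub[OF xy xZ yZ] vA by blast
        have uv: "E u v" using vu mg_sym[OF MG] by blast
        have hsuv: "hs E u v = hs E x y" using goalA[OF MG uv xy] uA vA by simp
        have wuv: "wallE E u v = wallE E x y"
          using hsuv hs_compl[OF MG uv] hs_compl[OF MG xy] by (simp add: wallE_def)
        have IH: "cls E \<phi> K R k (c u) (wallE E u v) = cls E \<phi> K R k (c x') (wallE E u v) \<and>
            c u (Wbar \<phi> K (wallE E u v)) = c x' (Wbar \<phi> K (wallE E u v))"
          using Suc.IH dux' gd_sym[OF MG, of u x'] uv x'y' uZ x'Z vZ y'Z hsuv hsq by metis
        have L: "cls E \<phi> K R k (c x) (wallE E x y) = cls E \<phi> K R k (c u) (wallE E x y) \<and>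
            c x (Wbar \<phi> K (wallE E x y)) = c u (Wbar \<phi> K (wallE E x y))"
          using local[OF xu xy xZ uZ yZ] .
        show "cls E \<phi> K R k (c x) (wallE E x y) = cls E \<phi> K R k (c x') (wallE E x y) \<and>
            c x (Wbar \<phi> K (wallE E x y)) = c x' (Wbar \<phi> K (wallE E x y))"
          using IH L wuv by simp
      qed
    qed
  qed
  show ?thesis
  proof (intro allI impI)
    fix x y x' y'
    assume H: "E x y \<and> vpt E x \<in> Z \<and> vpt E y \<notin> Z \<and> wallE E x y = W \<and>
           E x' y' \<and> vpt E x' \<in> Z \<and> vpt E y' \<notin> Z \<and> wallE E x' y' = W"
    have x'A: "x' \<in> hs E x y" using Zsub H by blast
    have "x' \<noteq> y'" using H mg_irr[OF MG] by blast
    then have x'in: "x' \<in> hs E x' y'" using hs_self[OF MG] by simp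
    have "wallE E x' y' = wallE E x y" using H by simp
    then have "hs E x' y' \<in> wallE E x y" by (metis insertI1 wallE_def)
    then have "hs E x' y' = hs E x y \<or> hs E x' y' = hs E y x" by (simp add: wallE_def)
    moreover have "x' \<notin> hs E y x" using x'A hs_compl[OF MG] H by blast
    ultimately have hsq: "hs E x y = hs E x' y'" using x'in by auto
    show "cls E \<phi> K R k (c x) W = cls E \<phi> K R k (c x') W \<and> c x (Wbar \<phi> K W) = c x' (Wbar \<phi> K W)"
      using main[of "gdist E x x'"] H hsq by blast
  qed
qed

end
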